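(* Let $\mathcal F$ be a completely positive trace-preserving map on $M_D$ with $\tau(\mathcal F)<1$, and let $\mathcal Z$ be its fundamental channel. Then $$\|\mathcal Z\|_{1\to1}\le\frac{1+\tau(\mathcal F)}{1-\tau(\mathcal F)}.$$
   Context: Notation: $M_D$ is the space of complex $D\times D$ matrices, and $\|\mathcal F\|_{1\to1}:=\sup_{\sigma\ne0}\|\mathcal F(\sigma)\|_1/\|\sigma\|_1$ with $\|\cdot\|_1$ the trace norm. The ergodicity coefficient is $\tau(\mathcal F):=\sup\{\|\mathcal F(\sigma)\|_1/\|\sigma\|_1:\ 0\ne\sigma,\ \mathrm{Tr}\,\sigma=0\}$. Fundamental channel: for a completely positive trace-preserving map $\mathcal F$ with $\tau(\mathcal F)<1$ and unique fixed density matrix $\rho$, let $\mathcal F^\infty(X):=\mathrm{Tr}(X)\,\rho$, which equals $\lim_{k\to\infty}\mathcal F^k$. The fundamental channel is $\mathcal Z:=(\mathrm{id}-\mathcal F+\mathcal F^\infty)^{-1}$. *)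

theory Defs
  imports "HOL-Analysis.Analysis"
begin

text \<open>Complex D x D matrices are modelled as complex^'n^'n with D = CARD('n).
  A superoperator is a map (complex^'n^'n) => (complex^'n^'n).\<close>

definition mat_adj :: "complex^'n^'n \<Rightarrow> complex^'n^'n" where
  "mat_adj A = (\<chi> i j. cnj (A $ j $ i))"

definition psd :: "complex^'n^'n \<Rightarrow> bool" where
  "psd A \<longleftrightarrow> mat_adj A = A \<and>
     (\<forall>v::complex^'n. 0 \<le> Re (\<Sum>i\<in>UNIV. \<Sum>j\<in>UNIV. cnj (v $ i) * A $ i $ j * v $ j))"

definition mat_abs :: "complex^'n^'n \<Rightarrow> complex^'n^'n" where
  "mat_abs A = (THE P. psd P \<and> P ** P = mat_adj A ** A)"

definition trace_norm :: "complex^'n^'n \<Rightarrow> real" where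
  "trace_norm A = Re (trace (mat_abs A))"

definition density_matrix :: "complex^'n^'n \<Rightarrow> bool" where
  "density_matrix \<rho> \<longleftrightarrow> psd \<rho> \<and> trace \<rho> = 1"

definition clinear_map :: "(complex^'n^'n \<Rightarrow> complex^'n^'n) \<Rightarrow> bool" where
  "clinear_map F \<longleftrightarrow> (\<forall>X Y. F (X + Y) = F X + F Y) \<and>
                      (\<forall>c X. F ((\<chi> i j. c * X $ i $ j)) = (\<chi> i j. c * F X $ i $ j))"

definition psd_on :: "'i set \<Rightarrow> ('i \<Rightarrow> 'i \<Rightarrow> complex) \<Rightarrow> bool" where
  "psd_on I M \<longleftrightarrow> (\<forall>i\<in>I. \<forall>j\<in>I. M i j = cnj (M j i)) \<and>
     (\<forall>v. 0 \<le> Re (\<Sum>i\<in>I. \<Sum>j\<in>I. cnj (v i) * M i j * v j))"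

text \<open>Ampliation id_k \<otimes> F acting on M_k(M_D), block matrices indexed by {..<k} \<times> 'n.\<close>
definition ampliation :: "(complex^'n^'n \<Rightarrow> complex^'n^'n) \<Rightarrow>
    (nat \<times> 'n \<Rightarrow> nat \<times> 'n \<Rightarrow> complex) \<Rightarrow> (nat \<times> 'n \<Rightarrow> nat \<times> 'n \<Rightarrow> complex)" where
  "ampliation F X = (\<lambda>(a, i) (b, j). F (\<chi> i' j'. X (a, i') (b, j')) $ i $ j)"

definition completely_positive :: "(complex^'n^'n \<Rightarrow> complex^'n^'n) \<Rightarrow> bool" where
  "completely_positive F \<longleftrightarrow>
     (\<forall>k::nat. \<forall>X. psd_on ({..<k} \<times> UNIV) X \<longrightarrow> psd_on ({..<k} \<times> UNIV) (ampliation F X))"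

definition trace_preserving :: "(complex^'n^'n \<Rightarrow> complex^'n^'n) \<Rightarrow> bool" where
  "trace_preserving F \<longleftrightarrow> (\<forall>X. trace (F X) = trace X)"

definition cptp :: "(complex^'n^'n \<Rightarrow> complex^'n^'n) \<Rightarrow> bool" where
  "cptp F \<longleftrightarrow> clinear_map F \<and> completely_positive F \<and> trace_preserving F"

definition norm_1to1 :: "(complex^'n^'n \<Rightarrow> complex^'n^'n) \<Rightarrow> real" where
  "norm_1to1 F = Sup {trace_norm (F \<sigma>) / trace_norm \<sigma> | \<sigma>. \<sigma> \<noteq> 0}"

text \<open>Ergodicity coefficient; sup over traceless nonzero sigma (0 included so that the
  supremum of the empty set, occurring only for D = 1, is 0).\<close>
definition ergodicity_coeff :: "(complex^'n^'n \<Rightarrow> complex^'n^'n) \<Rightarrow> real" where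
  "ergodicity_coeff F =
     Sup (insert 0 {trace_norm (F \<sigma>) / trace_norm \<sigma> | \<sigma>. \<sigma> \<noteq> 0 \<and> trace \<sigma> = 0})"

definition limit_channel :: "complex^'n^'n \<Rightarrow> (complex^'n^'n \<Rightarrow> complex^'n^'n)" where
  "limit_channel \<rho> = (\<lambda>X. (\<chi> i j. trace X * \<rho> $ i $ j))"

definition fundamental_channel ::
    "(complex^'n^'n \<Rightarrow> complex^'n^'n) \<Rightarrow> complex^'n^'n \<Rightarrow> (complex^'n^'n \<Rightarrow> complex^'n^'n)" where
  "fundamental_channel F \<rho> = inv (\<lambda>X. X - F X + limit_channel \<rho> X)"

end

theory Submission
  imports Defs
begin

definition ip :: "complex^'n \<Rightarrow> complex^'n \<Rightarrow> complex" where
  "ip u v = (\<Sum>i\<in>UNIV. cnj (u$i) * v$i)"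

definition rk1 :: "complex \<Rightarrow> complex^'n \<Rightarrow> complex^'n \<Rightarrow> complex^'n^'n" where
  "rk1 c u v = (\<chi> i j. c * u$i * cnj (v$j))"

lemma ip_add_right: "ip u (v + w) = ip u v + ip u w"
  by (simp add: ip_def distrib_left sum.distrib)
lemma ip_add_left: "ip (v + w) u = ip v u + ip w u"
  by (simp add: ip_def distrib_right sum.distrib)
lemma ip_diff_right: "ip u (v - w) = ip u v - ip u w"
  by (simp add: ip_def right_diff_distrib sum_subtractf)
lemma ip_diff_left: "ip (v - w) u = ip v u - ip w u"
  by (simp add: ip_def left_diff_distrib sum_subtractf)
lemma ip_scale_right: "ip u (c *s v) = c * ip u v"
  by (simp add: ip_def sum_distrib_left algebra_simps)
lemma ip_scale_left: "ip (c *s v) u = cnj c * ip v u"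
  by (simp add: ip_def sum_distrib_left algebra_simps)
lemma ip_zero_left[simp]: "ip 0 u = 0" by (simp add: ip_def)
lemma ip_zero_right[simp]: "ip u 0 = 0" by (simp add: ip_def)
lemma ip_sum_right: "ip u (\<Sum>k\<in>K. f k) = (\<Sum>k\<in>K. ip u (f k))"
  by (simp add: ip_def sum_distrib_left sum.swap[of _ K] )
lemma ip_sum_left: "ip (\<Sum>k\<in>K. f k) u = (\<Sum>k\<in>K. ip (f k) u)"
  by (simp add: ip_def sum_distrib_right sum.swap[of _ K] cnj_sum)
lemma ip_sym: "ip u v = cnj (ip v u)"
  by (simp add: ip_def cnj_sum mult.commute)

lemma ip_self: "ip v v = complex_of_real ((norm v)^2)"
proof -
  have "(norm v)^2 = (\<Sum>i\<in>UNIV. (cmod (v$i))^2)"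
    by (simp add: norm_vec_def L2_set_def sum_nonneg)
  moreover have "ip v v = (\<Sum>i\<in>UNIV. complex_of_real ((cmod (v$i))^2))"
    unfolding ip_def by (intro sum.cong refl) (subst complex_norm_square, rule mult.commute)
  ultimately show ?thesis by (simp add: of_real_sum)
qed

lemma ip_self_eq0: "ip v v = 0 \<longleftrightarrow> v = 0"
  by (simp add: ip_self)

lemma ip_norm1: "norm v = 1 \<Longrightarrow> ip v v = 1"
  by (simp add: ip_self)

lemma sum_mv: "(\<Sum>k\<in>K. (M k :: complex^'n^'n)) *v x = (\<Sum>k\<in>K. M k *v x)"
  by (simp add: vec_eq_iff matrix_vector_mult_def sum_distrib_right sum.swap[of _ K])

lemma rk1_mv: "rk1 c u v *v x = (c * ip v x) *s u"
  by (simp add: vec_eq_iff matrix_vector_mult_def rk1_def ip_def sum_distrib_left algebra_simps)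

lemma quad_ip: "(\<Sum>i\<in>UNIV. \<Sum>j\<in>UNIV. cnj (v $ i) * A $ i $ j * v $ j) = ip v (A *v v)"
  by (simp add: ip_def matrix_vector_mult_def sum_distrib_left mult.assoc)

lemma adj_ip: "ip x (A *v y) = ip (mat_adj A *v x) y"
proof -
  have "ip x (A *v y) = (\<Sum>i\<in>UNIV. \<Sum>j\<in>UNIV. cnj (x$i) * A$i$j * y$j)"
    by (simp add: ip_def matrix_vector_mult_def sum_distrib_left mult.assoc)
  also have "\<dots> = (\<Sum>j\<in>UNIV. \<Sum>i\<in>UNIV. cnj (x$i) * A$i$j * y$j)"
    by (rule sum.swap)
  also have "\<dots> = ip (mat_adj A *v x) y"
    by (simp add: ip_def matrix_vector_mult_def mat_adj_def sum_distrib_right sum_distrib_left ac_simps)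
  finally show ?thesis .
qed

lemma adj_adj[simp]: "mat_adj (mat_adj A) = A"
  by (simp add: mat_adj_def vec_eq_iff)

lemma herm_ip: "mat_adj H = H \<Longrightarrow> ip x (H *v y) = ip (H *v x) y"
  by (metis adj_ip)

lemma herm_real: "mat_adj H = H \<Longrightarrow> ip x (H *v x) = complex_of_real (Re (ip x (H *v x)))"
  by (metis herm_ip ip_sym Reals_cnj_iff of_real_Re)

lemma mv_scale: "(A::complex^'n^'m) *v (c *s x) = c *s (A *v x)"
  unfolding vec_eq_iff matrix_vector_mult_def
  by (auto simp: sum_distrib_left ac_simps intro!: sum.cong)

lemma mv_sum: "A *v (\<Sum>k\<in>K. f k) = (\<Sum>k\<in>K. A *v f k)"
  by (simp add: vec_eq_iff matrix_vector_mult_def sum_distrib_left sum.swap[of _ K])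

lemma scaleR_as_s: "r *\<^sub>R (x::complex^'n) = complex_of_real r *s x"
  by (simp add: vec_eq_iff) (simp add: scaleR_conv_of_real)

definition csub :: "(complex^'n) set \<Rightarrow> bool" where
  "csub S \<longleftrightarrow> 0 \<in> S \<and> (\<forall>x\<in>S. \<forall>y\<in>S. x + y \<in> S) \<and> (\<forall>c. \<forall>x\<in>S. c *s x \<in> S)"

lemma csub_subspace: "csub S \<Longrightarrow> subspace S"
  unfolding csub_def subspace_def by (simp add: scaleR_as_s)

lemma quad_expand:
  assumes H: "mat_adj H = H"
  shows "ip (v + c *s w) (H *v (v + c *s w)) = ip v (H *v v) + c * cnj (ip w (H *v v))
      + cnj c * ip w (H *v v) + cnj c * c * ip w (H *v w)"
proof -
  have "ip v (H *v w) = cnj (ip w (H *v v))"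
    using herm_ip[OF H, of v w] ip_sym by metis
  then show ?thesis
    by (simp add: matrix_vector_right_distrib mv_scale ip_add_left ip_add_right ip_scale_left
        ip_scale_right algebra_simps)
qed

lemma self_expand:
  "ip (v + c *s w) (v + c *s w) = ip v v + c * ip v w + cnj c * ip w v + cnj c * c * ip w w"
  by (simp add: ip_add_left ip_add_right ip_scale_left ip_scale_right algebra_simps)

lemma norm_sq_ip: "(norm v)^2 = Re (ip v v)"
  by (simp add: ip_self)

lemma eig_exists:
  assumes H: "mat_adj H = H" and S: "csub S" and inv: "\<forall>x\<in>S. H *v x \<in> S"
    and x0: "x0 \<in> S" "x0 \<noteq> 0"
  shows "\<exists>v\<in>S. norm v = 1 \<and> H *v v = ip v (H *v v) *s v"
proof -
  define q where "q v = Re (ip v (H *v v))" for v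
  let ?K = "S \<inter> sphere 0 1"
  have sub: "subspace S" using csub_subspace[OF S] .
  have "compact ?K"
    using closed_subspace[OF sub] compact_sphere closed_Int_compact by blast
  moreover have "(1 / norm x0) *\<^sub>R x0 \<in> ?K"
    using x0 sub by (simp add: subspace_scale)
  then have "?K \<noteq> {}" by blast
  moreover have "continuous_on ?K q"
    unfolding q_def ip_def matrix_vector_mult_def
    by (intro continuous_intros linear_continuous_on bounded_linear_vec_nth)
  ultimately obtain v where v: "v \<in> ?K" "\<forall>y\<in>?K. q y \<le> q v"
    using continuous_attains_sup by blast
  define M where "M = q v"
  have vS: "v \<in> S" and nv: "norm v = 1" using v by auto
  have ipvv: "ip v v = 1" using ip_norm1[OF nv] .
  have bound: "q y \<le> M * (norm y)^2" if y: "y \<in> S" for y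
  proof (cases "y = 0")
    case True then show ?thesis by (simp add: q_def)
  next
    case False
    define c where "c = complex_of_real (1 / norm y)"
    have cy: "c *s y = (1 / norm y) *\<^sub>R y" by (simp add: c_def scaleR_as_s)
    have "c *s y \<in> ?K"
      unfolding cy using y False sub by (simp add: subspace_scale)
    then have "q (c *s y) \<le> M" using v(2) M_def by blast
    moreover have "q (c *s y) = q y / (norm y)^2"
      by (simp add: q_def c_def mv_scale ip_scale_left ip_scale_right power2_eq_square)
    ultimately show ?thesis using False by (simp add: field_simps)
  qed
  have key: "ip w (H *v v) = 0" if w: "w \<in> S" "ip v w = 0" for w
  proof -
    define a where "a = ip w (H *v v)"
    define K where "K = q w - M * (norm w)^2"
    define t where "t = 1 / (\<bar>K\<bar> + 1)"
    define \<alpha> where "\<alpha> = (cmod a)^2"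
    have dpos: "\<bar>K\<bar> + 1 > 0" by arith
    have tpos: "t > 0" using dpos by (simp add: t_def)
    have tK: "t * K \<ge> -1"
    proof -
      have "t * \<bar>K\<bar> \<le> 1" using dpos by (simp add: t_def field_simps)
      moreover have "t * (-\<bar>K\<bar>) \<le> t * K" using tpos by (intro mult_left_mono) auto
      ultimately show ?thesis by linarith
    qed
    define c where "c = complex_of_real t * a"
    have wv: "ip w v = 0" using w(2) ip_sym by (metis complex_cnj_zero)
    have acnj: "a * cnj a = complex_of_real \<alpha>" unfolding \<alpha>_def by (rule complex_norm_square[symmetric])
    have acnj2: "cnj a * a = complex_of_real \<alpha>" using acnj by (simp add: mult.commute)
    have ca: "c * cnj a = complex_of_real (t * \<alpha>)"
      unfolding c_def by (simp add: mult.assoc acnj)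
    have ca2: "cnj c * a = complex_of_real (t * \<alpha>)"
      unfolding c_def by (simp add: mult.assoc acnj2)
    have "cnj c * c = (complex_of_real t * complex_of_real t) * (cnj a * a)"
      unfolding c_def by (simp add: ac_simps)
    then have cc: "cnj c * c = complex_of_real (t^2 * \<alpha>)"
      by (simp add: acnj2 power2_eq_square)
    have yS: "v + c *s w \<in> S" using S vS w(1) unfolding csub_def by blast
    have "q (v + c *s w) \<le> M * (norm (v + c *s w))^2" using bound[OF yS] .
    moreover have "q (v + c *s w) = M + 2 * t * \<alpha> + t^2 * \<alpha> * q w"
    proof -
      have e1: "ip v (H *v v) = complex_of_real M" using herm_real[OF H, of v] by (simp add: M_def q_def)
      have e2: "ip w (H *v w) = complex_of_real (q w)" using herm_real[OF H, of w] by (simp add: q_def)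
      have "ip (v + c *s w) (H *v (v + c *s w)) = complex_of_real (M + 2 * t * \<alpha> + t^2 * \<alpha> * q w)"
        unfolding quad_expand[OF H] a_def[symmetric] ca ca2 cc e1 e2 by simp
      then show ?thesis by (simp add: q_def)
    qed
    moreover have "(norm (v + c *s w))^2 = 1 + t^2 * \<alpha> * (norm w)^2"
      unfolding norm_sq_ip self_expand cc using w(2) wv ipvv
      by (simp add: norm_sq_ip)
    ultimately have "2 * t * \<alpha> + t^2 * \<alpha> * K \<le> 0"
      by (simp add: K_def algebra_simps)
    then have "t * (\<alpha> * (2 + t * K)) \<le> 0" by (simp add: algebra_simps power2_eq_square)
    then have "\<alpha> * (2 + t * K) \<le> 0" using tpos by (simp add: mult_le_0_iff)
    moreover have "2 + t * K > 0" using tK by linarith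
    ultimately have "\<alpha> \<le> 0" by (simp add: mult_le_0_iff)
    then have "\<alpha> = 0" by (simp add: \<alpha>_def)
    then show ?thesis by (simp add: \<alpha>_def a_def)
  qed
  define lam where "lam = ip v (H *v v)"
  define w where "w = H *v v - lam *s v"
  have wS: "w \<in> S"
  proof -
    have "(-lam) *s v \<in> S" using S vS unfolding csub_def by blast
    moreover have "H *v v \<in> S" using inv vS by blast
    ultimately have "H *v v + (-lam) *s v \<in> S" using S unfolding csub_def by blast
    moreover have "H *v v + (-lam) *s v = w" by (simp add: w_def vec_eq_iff)
    ultimately show ?thesis by simp
  qed
  have "ip v w = 0" by (simp add: w_def ip_diff_right ip_scale_right ipvv lam_def)
  then have w0: "ip w (H *v v) = 0" using key wS by blast
  have "ip w w = ip w (H *v v) - lam * ip w v"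
    by (simp add: w_def ip_diff_right ip_scale_right)
  also have "ip w v = 0" using \<open>ip v w = 0\<close> ip_sym by (metis complex_cnj_zero)
  finally have "ip w w = 0" using w0 by simp
  then have "w = 0" by (simp add: ip_self_eq0)
  then have "H *v v = lam *s v" by (simp add: w_def)
  then show ?thesis using vS nv unfolding lam_def by blast
qed

lemma spectral_sub:
  assumes H: "mat_adj H = H"
  shows "csub S \<Longrightarrow> (\<forall>x\<in>S. H *v x \<in> S) \<Longrightarrow> \<exists>B. finite B \<and> B \<subseteq> S \<and>
    (\<forall>b\<in>B. norm b = 1 \<and> H *v b = ip b (H *v b) *s b) \<and>
    (\<forall>b\<in>B. \<forall>c\<in>B. b \<noteq> c \<longrightarrow> ip b c = 0) \<and> (\<forall>x\<in>S. x = (\<Sum>b\<in>B. ip b x *s b))"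
proof (induction "dim S" arbitrary: S rule: less_induct)
  case less
  show ?case
  proof (cases "\<exists>x0\<in>S. x0 \<noteq> 0")
    case False
    then have "\<forall>x\<in>S. x = (\<Sum>b\<in>{}. ip b x *s b)" by auto
    then show ?thesis by (intro exI[of _ "{}"]) auto
  next
    case True
    then obtain x0 where "x0 \<in> S" "x0 \<noteq> 0" by blast
    from eig_exists[OF H less.prems(1) less.prems(2) this] obtain v where
      vS: "v \<in> S" and nv: "norm v = 1" and ev: "H *v v = ip v (H *v v) *s v" by blast
    define lam where "lam = ip v (H *v v)"
    have evl: "H *v v = lam *s v" unfolding lam_def by (rule ev)
    have ipvv: "ip v v = 1" using ip_norm1[OF nv] .
    define S' where "S' = {x\<in>S. ip v x = 0}"
    have cS': "csub S'" using less.prems(1) unfolding csub_def S'_def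
      by (auto simp: ip_add_right ip_scale_right)
    have iS': "\<forall>x\<in>S'. H *v x \<in> S'"
    proof
      fix x assume x: "x \<in> S'"
      have "ip v (H *v x) = ip (H *v v) x" by (rule herm_ip[OF H])
      also have "\<dots> = cnj lam * ip v x" unfolding evl by (simp add: ip_scale_left)
      also have "\<dots> = 0" using x by (simp add: S'_def)
      finally show "H *v x \<in> S'" using x less.prems(2) by (simp add: S'_def)
    qed
    have "dim S' < dim S"
    proof (rule dim_psubset)
      have "subspace S'" "subspace S" using csub_subspace cS' less.prems(1) by auto
      then have e1: "span S' = S'" and e2: "span S = S" by (simp_all add: span_eq_iff)
      have "S' \<subset> S"
      proof -
        have "S' \<subseteq> S" by (auto simp: S'_def)
        moreover have "v \<notin> S'" using ipvv by (simp add: S'_def)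
        ultimately show ?thesis using vS by blast
      qed
      then show "span S' \<subset> span S" by (simp only: e1 e2)
    qed
    from less.hyps[OF this cS' iS'] obtain B' where B': "finite B'" "B' \<subseteq> S'"
      "\<forall>b\<in>B'. norm b = 1 \<and> H *v b = ip b (H *v b) *s b"
      "\<forall>b\<in>B'. \<forall>c\<in>B'. b \<noteq> c \<longrightarrow> ip b c = 0" "\<forall>x\<in>S'. x = (\<Sum>b\<in>B'. ip b x *s b)"
      by blast
    have vB': "v \<notin> B'" using B'(2) ipvv by (auto simp: S'_def)
    have orth1: "ip v b = 0" if "b \<in> B'" for b using that B'(2) by (auto simp: S'_def)
    have orth2: "ip b v = 0" if "b \<in> B'" for b using orth1[OF that] ip_sym by (metis complex_cnj_zero)
    have f: "finite (insert v B')" using B'(1) by simp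
    have s: "insert v B' \<subseteq> S" using vS B'(2) by (auto simp: S'_def)
    have e: "\<forall>b\<in>insert v B'. norm b = 1 \<and> H *v b = ip b (H *v b) *s b"
      using nv ev B'(3) by auto
    have o: "\<forall>b\<in>insert v B'. \<forall>c\<in>insert v B'. b \<noteq> c \<longrightarrow> ip b c = 0"
      using orth1 orth2 B'(4) by auto
    have x: "\<forall>x\<in>S. x = (\<Sum>b\<in>insert v B'. ip b x *s b)"
    proof
      fix x assume xS: "x \<in> S"
      define x' where "x' = x - ip v x *s v"
      have "x + (- ip v x) *s v \<in> S" using xS vS less.prems(1) unfolding csub_def by blast
      moreover have "x + (- ip v x) *s v = x'" by (simp add: x'_def vec_eq_iff)
      ultimately have "x' \<in> S" by simp
      moreover have "ip v x' = 0" by (simp add: x'_def ip_diff_right ip_scale_right ipvv)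
      ultimately have "x' \<in> S'" by (simp add: S'_def)
      then have "x' = (\<Sum>b\<in>B'. ip b x' *s b)" using B'(5) by blast
      also have "\<dots> = (\<Sum>b\<in>B'. ip b x *s b)"
        by (intro sum.cong refl) (simp add: x'_def ip_diff_right ip_scale_right orth2)
      finally have "x - ip v x *s v = (\<Sum>b\<in>B'. ip b x *s b)" by (simp add: x'_def)
      then have "x = ip v x *s v + (\<Sum>b\<in>B'. ip b x *s b)" by (metis diff_eq_eq add.commute)
      then show "x = (\<Sum>b\<in>insert v B'. ip b x *s b)" using B'(1) vB' by simp
    qed
    show ?thesis by (rule exI[of _ "insert v B'"]) (use f s e o x in blast)
  qed
qed

lemma csub_UNIV: "csub UNIV" by (simp add: csub_def)

lemma spectral:
  assumes H: "mat_adj H = H"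
  obtains B where "finite B" "\<And>b. b \<in> B \<Longrightarrow> norm b = 1"
    "\<And>b. b \<in> B \<Longrightarrow> H *v b = ip b (H *v b) *s b"
    "\<And>b c. b \<in> B \<Longrightarrow> c \<in> B \<Longrightarrow> b \<noteq> c \<Longrightarrow> ip b c = 0"
    "\<And>x. x = (\<Sum>b\<in>B. ip b x *s b)"
  using spectral_sub[OF H csub_UNIV] by auto

definition onb :: "(complex^'n) set \<Rightarrow> bool" where
  "onb B \<longleftrightarrow> finite B \<and> (\<forall>b\<in>B. norm b = 1) \<and> (\<forall>b\<in>B. \<forall>c\<in>B. b \<noteq> c \<longrightarrow> ip b c = 0)
     \<and> (\<forall>x. x = (\<Sum>b\<in>B. ip b x *s b))"

lemma spectral':
  assumes H: "mat_adj H = H"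
  shows "\<exists>B. onb B \<and> (\<forall>b\<in>B. H *v b = ip b (H *v b) *s b)"
proof -
  obtain B where "finite B" "\<And>b. b \<in> B \<Longrightarrow> norm b = 1"
    "\<And>b. b \<in> B \<Longrightarrow> H *v b = ip b (H *v b) *s b"
    "\<And>b c. b \<in> B \<Longrightarrow> c \<in> B \<Longrightarrow> b \<noteq> c \<Longrightarrow> ip b c = 0"
    "\<And>x. x = (\<Sum>b\<in>B. ip b x *s b)"
    using spectral[OF H] by blast
  then show ?thesis unfolding onb_def by (intro exI[of _ B] conjI ballI impI) auto
qed

lemma onb_fin: "onb B \<Longrightarrow> finite B" by (simp add: onb_def)

lemma onb_exp: "onb B \<Longrightarrow> x = (\<Sum>b\<in>B. ip b x *s b)"
  unfolding onb_def by blast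

lemma onb_norm: "onb B \<Longrightarrow> b \<in> B \<Longrightarrow> norm b = 1"
  unfolding onb_def by blast

lemma onb_orth: "onb B \<Longrightarrow> b \<in> B \<Longrightarrow> c \<in> B \<Longrightarrow> b \<noteq> c \<Longrightarrow> ip b c = 0"
  unfolding onb_def by blast

lemma onb_ip: "onb B \<Longrightarrow> b \<in> B \<Longrightarrow> c \<in> B \<Longrightarrow> ip b c = (if b = c then 1 else 0)"
  using onb_norm[of B b] onb_orth[of B b c] ip_norm1[of b] by auto

lemma onb_sum_coeff:
  assumes B: "onb B" and c: "c \<in> B"
  shows "ip c (\<Sum>b\<in>B. f b *s b) = f c"
proof -
  have fin: "finite B" using onb_fin[OF B] .
  have "ip c (\<Sum>b\<in>B. f b *s b) = (\<Sum>b\<in>B. f b * ip c b)" by (simp add: ip_sum_right ip_scale_right)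
  also have "\<dots> = (\<Sum>b\<in>B. if c = b then f b else 0)"
    by (intro sum.cong refl) (auto simp: onb_ip[OF B c])
  also have "\<dots> = f c" using fin c by simp
  finally show ?thesis .
qed

lemma mv_expand: "onb B \<Longrightarrow> A *v x = (\<Sum>b\<in>B. ip b x *s (A *v b))"
proof -
  assume B: "onb B"
  from onb_exp[OF B, of x] have "A *v x = A *v (\<Sum>b\<in>B. ip b x *s b)" by (rule arg_cong)
  then show ?thesis by (simp add: mv_sum mv_scale)
qed

lemma psd_iff: "psd A \<longleftrightarrow> mat_adj A = A \<and> (\<forall>v. 0 \<le> Re (ip v (A *v v)))"
  by (simp add: psd_def quad_ip)

lemma trace_rk1: "trace (rk1 c u v) = c * ip v u"
  by (simp add: trace_def rk1_def ip_def sum_distrib_left ac_simps)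

lemma trace_sum: "trace (\<Sum>k\<in>K. (M k :: complex^'n^'n)) = (\<Sum>k\<in>K. trace (M k))"
  unfolding trace_def by (simp add: sum.swap[of _ K])

lemma adj_sum: "mat_adj (\<Sum>k\<in>K. M k) = (\<Sum>k\<in>K. mat_adj (M k))"
  by (simp add: vec_eq_iff mat_adj_def)

lemma adj_rk1: "mat_adj (rk1 c u v) = rk1 (cnj c) v u"
  by (simp add: vec_eq_iff mat_adj_def rk1_def ac_simps)

lemma rk1_scale: "rk1 c u v = rk1 1 (c *s u) v"
  by (simp add: vec_eq_iff rk1_def ac_simps)

lemma sqrt_unique:
  assumes P: "psd P" and Q: "psd Q" and eq: "Q ** Q = P ** P"
  shows "Q = P"
proof -
  have hP: "mat_adj P = P" and hQ: "mat_adj Q = Q" and qQ: "\<And>v. 0 \<le> Re (ip v (Q *v v))"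
    and qP: "\<And>v. 0 \<le> Re (ip v (P *v v))"
    using P Q by (auto simp: psd_iff)
  obtain B where B: "onb B" and ev: "\<And>b. b \<in> B \<Longrightarrow> P *v b = ip b (P *v b) *s b"
    using spectral'[OF hP] by blast
  have Qb: "Q *v b = P *v b" if b: "b \<in> B" for b
  proof -
    define \<mu> where "\<mu> = Re (ip b (P *v b))"
    have Pb: "P *v b = complex_of_real \<mu> *s b"
      using herm_real[OF hP, of b] ev[OF b] unfolding \<mu>_def by metis
    have \<mu>0: "\<mu> \<ge> 0" using qP \<mu>_def by auto
    have PPb: "P *v (P *v b) = complex_of_real (\<mu>^2) *s b"
      by (simp add: Pb mv_scale power2_eq_square)
    have QQb: "Q *v (Q *v b) = complex_of_real (\<mu>^2) *s b"
      using PPb eq by (simp add: matrix_vector_mul_assoc)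
    show ?thesis
    proof (cases "\<mu> = 0")
      case True
      have "ip (Q *v b) (Q *v b) = ip b (Q *v (Q *v b))" using herm_ip[OF hQ, of b "Q *v b"] by simp
      also have "\<dots> = 0" using QQb True by simp
      finally have "Q *v b = 0" by (simp add: ip_self_eq0)
      then show ?thesis using Pb True by simp
    next
      case False
      then have \<mu>p: "\<mu> > 0" using \<mu>0 by simp
      define w where "w = Q *v b - complex_of_real \<mu> *s b"
      have Qw: "Q *v w = (- complex_of_real \<mu>) *s w"
        by (simp add: w_def matrix_vector_mult_diff_distrib mv_scale QQb vec_eq_iff algebra_simps
            power2_eq_square)
      have "Re (ip w (Q *v w)) = - \<mu> * (norm w)^2"
        unfolding Qw ip_scale_right by (simp add: ip_self)
      then have "\<mu> * (norm w)^2 \<le> 0" using qQ[of w] by simp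
      then have "(norm w)^2 \<le> 0" using \<mu>p by (simp add: mult_le_0_iff)
      then have "w = 0" by simp
      then show ?thesis using Pb by (simp add: w_def)
    qed
  qed
  show ?thesis
    unfolding matrix_eq
  proof
    fix x
    show "Q *v x = P *v x"
      unfolding mv_expand[OF B, of Q x] mv_expand[OF B, of P x]
      by (intro sum.cong refl) (simp add: Qb)
  qed
qed

lemma adjA_ip: "ip x ((mat_adj A ** A) *v y) = ip (A *v x) (A *v y)"
proof -
  have "ip x ((mat_adj A ** A) *v y) = ip x (mat_adj A *v (A *v y))"
    by (simp add: matrix_vector_mul_assoc)
  also have "\<dots> = ip (A *v x) (A *v y)" using adj_ip[of x "mat_adj A" "A *v y"] by simp
  finally show ?thesis .
qed

lemma adjA_herm: "mat_adj (mat_adj A ** A) = mat_adj A ** A"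
  unfolding matrix_eq
proof
  fix x
  have "\<forall>y. ip y (mat_adj (mat_adj A ** A) *v x) = ip y ((mat_adj A ** A) *v x)"
  proof
    fix y
    have "ip y (mat_adj (mat_adj A ** A) *v x) = ip ((mat_adj A ** A) *v y) x"
      using adj_ip[of y "mat_adj (mat_adj A ** A)" x] by simp
    also have "\<dots> = cnj (ip x ((mat_adj A ** A) *v y))" by (rule ip_sym)
    also have "\<dots> = cnj (ip (A *v x) (A *v y))" by (simp add: adjA_ip)
    also have "\<dots> = ip (A *v y) (A *v x)" by (simp add: ip_sym[of "A *v y"])
    also have "\<dots> = ip y ((mat_adj A ** A) *v x)" by (simp add: adjA_ip)
    finally show "ip y (mat_adj (mat_adj A ** A) *v x) = ip y ((mat_adj A ** A) *v x)" .
  qed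
  then have "ip d d = 0" if "d = mat_adj (mat_adj A ** A) *v x - (mat_adj A ** A) *v x" for d
    using that by (simp add: ip_diff_left ip_diff_right)
  then show "mat_adj (mat_adj A ** A) *v x = (mat_adj A ** A) *v x"
    by (simp add: ip_self_eq0)
qed

lemma abs_decomp:
  fixes A :: "complex^'n^'n"
  obtains B lam where "onb B" "\<And>b. b \<in> B \<Longrightarrow> lam b \<ge> 0"
    "\<And>b. b \<in> B \<Longrightarrow> (mat_adj A ** A) *v b = complex_of_real (lam b) *s b"
    "mat_abs A = (\<Sum>b\<in>B. rk1 (complex_of_real (sqrt (lam b))) b b)"
proof -
  let ?H = "mat_adj A ** A"
  have herm: "mat_adj ?H = ?H" by (rule adjA_herm)
  obtain B where B: "onb B" and ev: "\<And>b. b \<in> B \<Longrightarrow> ?H *v b = ip b (?H *v b) *s b"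
    using spectral'[OF herm] by blast
  define lam where "lam b = Re (ip b (?H *v b))" for b
  have lam0: "lam b \<ge> 0" for b unfolding lam_def adjA_ip by (simp add: ip_self)
  have ev': "?H *v b = complex_of_real (lam b) *s b" if "b \<in> B" for b
    using herm_real[OF herm, of b] ev[OF that] unfolding lam_def by metis
  define P where "P = (\<Sum>b\<in>B. rk1 (complex_of_real (sqrt (lam b))) b b)"
  have Pv: "P *v x = (\<Sum>b\<in>B. (complex_of_real (sqrt (lam b)) * ip b x) *s b)" for x
    by (simp add: P_def sum_mv rk1_mv)
  have hP: "mat_adj P = P" by (simp add: P_def adj_sum adj_rk1)
  have qP: "0 \<le> Re (ip v (P *v v))" for v
  proof -
    have "ip v (P *v v) = (\<Sum>b\<in>B. complex_of_real (sqrt (lam b)) * (ip b v * cnj (ip b v)))"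
      unfolding Pv by (simp add: ip_sum_right ip_scale_right ip_sym[of v] ac_simps)
    also have "\<dots> = (\<Sum>b\<in>B. complex_of_real (sqrt (lam b) * (cmod (ip b v))^2))"
      by (intro sum.cong refl) (simp only: of_real_mult complex_norm_square)
    finally have "Re (ip v (P *v v)) = (\<Sum>b\<in>B. sqrt (lam b) * (cmod (ip b v))^2)"
      by (simp add: Re_sum)
    also have "\<dots> \<ge> 0" using lam0 by (intro sum_nonneg) simp
    finally show ?thesis .
  qed
  have psdP: "psd P" using hP qP by (simp add: psd_iff)
  have PP: "P ** P = ?H"
    unfolding matrix_eq
  proof
    fix x
    have "(P ** P) *v x = P *v (P *v x)" by (simp add: matrix_vector_mul_assoc)
    also have "\<dots> = (\<Sum>b\<in>B. (complex_of_real (sqrt (lam b)) * ip b (P *v x)) *s b)" by (rule Pv)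
    also have "\<dots> = (\<Sum>b\<in>B. (complex_of_real (lam b) * ip b x) *s b)"
    proof (intro sum.cong refl)
      fix b assume b: "b \<in> B"
      have "ip b (P *v x) = complex_of_real (sqrt (lam b)) * ip b x"
        unfolding Pv using onb_sum_coeff[OF B b] .
      then show "(complex_of_real (sqrt (lam b)) * ip b (P *v x)) *s b
          = (complex_of_real (lam b) * ip b x) *s b"
        using lam0[of b] by (simp add: mult.assoc[symmetric] of_real_mult[symmetric])
    qed
    also have "\<dots> = ?H *v x"
      unfolding mv_expand[OF B, of ?H x] by (intro sum.cong refl) (simp add: ev')
    finally show "(P ** P) *v x = ?H *v x" .
  qed
  have "mat_abs A = P"
    unfolding mat_abs_def
  proof (rule the_equality)
    show "psd P \<and> P ** P = ?H" using psdP PP by simp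
    fix Q assume "psd Q \<and> Q ** Q = ?H"
    then show "Q = P" using sqrt_unique[OF psdP, of Q] PP by simp
  qed
  then show ?thesis using that[OF B lam0 ev'] P_def by blast
qed

lemma sum_CS: "cmod (\<Sum>i\<in>I. a i * b i) \<le> sqrt (\<Sum>i\<in>I. (cmod (a i))^2) * sqrt (\<Sum>i\<in>I. (cmod (b i))^2)"
proof -
  have "cmod (\<Sum>i\<in>I. a i * b i) \<le> (\<Sum>i\<in>I. cmod (a i) * cmod (b i))"
    using norm_sum[of "\<lambda>i. a i * b i" I] by (simp add: norm_mult)
  also have "\<dots> = (\<Sum>i\<in>I. \<bar>cmod (a i)\<bar> * \<bar>cmod (b i)\<bar>)" by simp
  also have "\<dots> \<le> L2_set (\<lambda>i. cmod (a i)) I * L2_set (\<lambda>i. cmod (b i)) I" by (rule L2_set_mult_ineq)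
  finally show ?thesis by (simp add: L2_set_def)
qed

lemma ip_CS: "cmod (ip u v) \<le> norm u * norm v"
  using sum_CS[of "\<lambda>i. cnj (u$i)" "\<lambda>i. v$i" UNIV] by (simp add: ip_def norm_vec_def L2_set_def)

lemma norm_smult_real: "norm (complex_of_real r *s (x::complex^'n)) = \<bar>r\<bar> * norm x"
  by (simp add: scaleR_as_s[symmetric])

lemma norm_smult: "norm (c *s (x::complex^'n)) = cmod c * norm x"
  by (simp add: norm_vec_def norm_mult L2_set_right_distrib)

lemma bessel:
  assumes fin: "finite I" and on: "\<And>i j. i \<in> I \<Longrightarrow> j \<in> I \<Longrightarrow> ip (e i) (e j) = (if i = j then 1 else 0)"
  shows "(\<Sum>i\<in>I. (cmod (ip (e i) x))^2) \<le> (norm x)^2"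
proof -
  define a where "a i = ip (e i) x" for i
  define p where "p = (\<Sum>i\<in>I. a i *s e i)"
  define y where "y = x - p"
  have coef: "ip (e j) p = a j" if j: "j \<in> I" for j
  proof -
    have "ip (e j) p = (\<Sum>i\<in>I. a i * ip (e j) (e i))" by (simp add: p_def ip_sum_right ip_scale_right)
    also have "\<dots> = (\<Sum>i\<in>I. if j = i then a i else 0)" by (intro sum.cong refl) (simp add: on j)
    also have "\<dots> = a j" using fin j by simp
    finally show ?thesis .
  qed
  have ey: "ip (e i) y = 0" if "i \<in> I" for i
    by (simp add: y_def ip_diff_right coef that a_def)
  have py: "ip p y = 0"
    by (simp add: p_def ip_sum_left ip_scale_left ey)
  have yp: "ip y p = 0" using py ip_sym by (metis complex_cnj_zero)
  have pp: "ip p p = (\<Sum>i\<in>I. complex_of_real ((cmod (a i))^2))"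
  proof -
    have "ip p p = (\<Sum>i\<in>I. cnj (a i) * ip (e i) p)" by (simp add: p_def[of] ip_sum_left ip_scale_left)
    also have "\<dots> = (\<Sum>i\<in>I. complex_of_real ((cmod (a i))^2))"
      by (intro sum.cong refl) (subst complex_norm_square, simp add: coef mult.commute)
    finally show ?thesis .
  qed
  have "x = y + p" by (simp add: y_def)
  then have "ip x x = ip y y + ip p p" by (simp add: ip_add_left ip_add_right py yp)
  then have "(norm x)^2 = (norm y)^2 + (\<Sum>i\<in>I. (cmod (a i))^2)"
    by (simp add: norm_sq_ip pp Re_sum)
  then show ?thesis by (simp add: a_def)
qed

lemma tn_struct:
  fixes A :: "complex^'n^'n"
  obtains B s u where "onb B" "\<And>b. b\<in>B \<Longrightarrow> s b \<ge> 0" "\<And>b. b\<in>B \<Longrightarrow> norm (u b) = 1"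
    "A = (\<Sum>b\<in>B. rk1 (complex_of_real (s b)) (u b) b)"
    "trace_norm A = (\<Sum>b\<in>B. s b)"
    "\<And>b. b\<in>B \<Longrightarrow> A *v b = complex_of_real (s b) *s u b"
    "\<And>b c. b\<in>B \<Longrightarrow> c\<in>B \<Longrightarrow> s b > 0 \<Longrightarrow> s c > 0 \<Longrightarrow> ip (u b) (u c) = (if b = c then 1 else 0)"
proof -
  obtain B lam where B: "onb B" and lam0: "\<And>b. b \<in> B \<Longrightarrow> lam b \<ge> 0"
    and ev: "\<And>b. b\<in>B \<Longrightarrow> (mat_adj A ** A) *v b = complex_of_real (lam b) *s b"
    and ab: "mat_abs A = (\<Sum>b\<in>B. rk1 (complex_of_real (sqrt (lam b))) b b)"
    using abs_decomp by blast
  define s where "s b = sqrt (lam b)" for b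
  define u where "u b = (if s b = 0 then b else complex_of_real (1 / s b) *s (A *v b))" for b
  have s0: "s b \<ge> 0" if "b \<in> B" for b using lam0[OF that] by (simp add: s_def)
  have AA: "ip (A *v b) (A *v c) = complex_of_real (lam c) * ip b c" if "c \<in> B" for b c
    using adjA_ip[of b A c] ev[OF that] by (simp add: ip_scale_right)
  have nAb: "norm (A *v b) = s b" if b: "b \<in> B" for b
  proof -
    have "ip (A *v b) (A *v b) = complex_of_real (lam b)"
      using AA[OF b, of b] ip_norm1[OF onb_norm[OF B b]] by simp
    then have "lam b = (norm (A *v b))^2" by (simp add: norm_sq_ip)
    then show ?thesis by (simp add: s_def)
  qed
  have Ab: "A *v b = complex_of_real (s b) *s u b" if b: "b \<in> B" for b
  proof (cases "s b = 0")
    case True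
    then have "A *v b = 0" using nAb[OF b] by simp
    then show ?thesis using True by (simp add: u_def)
  next
    case False
    then show ?thesis by (simp add: u_def vec_eq_iff)
  qed
  have nu: "norm (u b) = 1" if b: "b \<in> B" for b
  proof (cases "s b = 0")
    case True
    then show ?thesis using onb_norm[OF B b] by (simp add: u_def)
  next
    case False
    then show ?thesis using nAb[OF b] s0[OF b] by (simp add: u_def norm_smult norm_divide)
  qed
  have dec: "A = (\<Sum>b\<in>B. rk1 (complex_of_real (s b)) (u b) b)"
    unfolding matrix_eq
  proof
    fix x
    show "A *v x = (\<Sum>b\<in>B. rk1 (complex_of_real (s b)) (u b) b) *v x"
      unfolding mv_expand[OF B, of A x] sum_mv rk1_mv
      by (intro sum.cong refl) (simp add: Ab ac_simps)
  qed
  have tn: "trace_norm A = (\<Sum>b\<in>B. s b)"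
  proof -
    have "trace (mat_abs A) = (\<Sum>b\<in>B. complex_of_real (s b))"
      unfolding ab trace_sum trace_rk1
      by (intro sum.cong refl) (simp add: s_def ip_norm1[OF onb_norm[OF B]])
    then show ?thesis by (simp add: trace_norm_def Re_sum)
  qed
  have orth: "ip (u b) (u c) = (if b = c then 1 else 0)"
    if b: "b\<in>B" and c: "c\<in>B" and sb: "s b > 0" and sc: "s c > 0" for b c
  proof -
    have "ip (u b) (u c) = complex_of_real (1 / s b) * complex_of_real (1 / s c) * ip (A *v b) (A *v c)"
      using sb sc by (simp add: u_def ip_scale_left ip_scale_right)
    also have "\<dots> = complex_of_real (1 / s b) * complex_of_real (1 / s c) * complex_of_real (lam c) * ip b c"
      by (simp add: AA[OF c])
    also have "\<dots> = (if b = c then 1 else 0)"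
    proof (cases "b = c")
      case True
      have "lam c = (s c)^2" using lam0[OF c] by (simp add: s_def)
      then show ?thesis using True sc ip_norm1[OF onb_norm[OF B c]]
        by (simp add: power2_eq_square)
    next
      case False
      then show ?thesis by (simp add: onb_ip[OF B b c])
    qed
    finally show ?thesis .
  qed
  show ?thesis using that[OF B s0 nu dec tn Ab orth] by blast
qed

lemma tn_le:
  fixes A :: "complex^'n^'n"
  assumes fin: "finite K" and nx: "\<And>k. k\<in>K \<Longrightarrow> norm (x k) \<le> 1" and ny: "\<And>k. k\<in>K \<Longrightarrow> norm (y k) \<le> 1"
    and A: "A = (\<Sum>k\<in>K. rk1 (c k) (x k) (y k))"
  shows "trace_norm A \<le> (\<Sum>k\<in>K. cmod (c k))"
proof -
  obtain B s u where B: "onb B" and s0: "\<And>b. b\<in>B \<Longrightarrow> s b \<ge> 0" and nu: "\<And>b. b\<in>B \<Longrightarrow> norm (u b) = 1"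
    and "A = (\<Sum>b\<in>B. rk1 (complex_of_real (s b)) (u b) b)"
    and tn: "trace_norm A = (\<Sum>b\<in>B. s b)"
    and Ab: "\<And>b. b\<in>B \<Longrightarrow> A *v b = complex_of_real (s b) *s u b"
    and orth: "\<And>b c. b\<in>B \<Longrightarrow> c\<in>B \<Longrightarrow> s b > 0 \<Longrightarrow> s c > 0 \<Longrightarrow> ip (u b) (u c) = (if b = c then 1 else 0)"
    using tn_struct[of A] by blast
  define B' where "B' = {b\<in>B. s b > 0}"
  have finB: "finite B" using onb_fin[OF B] .
  have finB': "finite B'" using finB by (simp add: B'_def)
  have "(\<Sum>b\<in>B. s b) = (\<Sum>b\<in>B'. s b)"
    using finB s0 by (intro sum.mono_neutral_right) (auto simp: B'_def less_le)
  then have tn': "trace_norm A = (\<Sum>b\<in>B'. s b)" using tn by simp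
  define T where "T k = (\<Sum>b\<in>B'. ip (y k) b * ip (u b) (x k))" for k
  have sb: "complex_of_real (s b) = (\<Sum>k\<in>K. c k * (ip (y k) b * ip (u b) (x k)))" if b: "b \<in> B'" for b
  proof -
    have bB: "b \<in> B" using b by (simp add: B'_def)
    have "ip (u b) (A *v b) = complex_of_real (s b)"
      using Ab[OF bB] ip_norm1[OF nu[OF bB]] by (simp add: ip_scale_right)
    moreover have "A *v b = (\<Sum>k\<in>K. (c k * ip (y k) b) *s x k)" by (simp add: A sum_mv rk1_mv)
    ultimately show ?thesis by (simp add: ip_sum_right ip_scale_right ac_simps)
  qed
  have "complex_of_real (\<Sum>b\<in>B'. s b) = (\<Sum>b\<in>B'. \<Sum>k\<in>K. c k * (ip (y k) b * ip (u b) (x k)))"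
    by (simp add: of_real_sum sb)
  also have "\<dots> = (\<Sum>k\<in>K. c k * T k)"
    unfolding T_def sum_distrib_left by (rule sum.swap)
  finally have eq: "complex_of_real (\<Sum>b\<in>B'. s b) = (\<Sum>k\<in>K. c k * T k)" .
  have Tk: "cmod (T k) \<le> 1" if k: "k \<in> K" for k
  proof -
    have b1: "(\<Sum>b\<in>B'. (cmod (ip b (y k)))^2) \<le> (norm (y k))^2"
      using finB' by (intro bessel) (auto simp: B'_def onb_ip[OF B])
    have b2: "(\<Sum>b\<in>B'. (cmod (ip (u b) (x k)))^2) \<le> (norm (x k))^2"
      using finB' by (intro bessel) (auto simp: B'_def orth)
    have e: "(\<Sum>b\<in>B'. (cmod (ip (y k) b))^2) = (\<Sum>b\<in>B'. (cmod (ip b (y k)))^2)"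
      by (intro sum.cong refl) (metis complex_mod_cnj ip_sym)
    have "cmod (T k) \<le> sqrt (\<Sum>b\<in>B'. (cmod (ip (y k) b))^2) * sqrt (\<Sum>b\<in>B'. (cmod (ip (u b) (x k)))^2)"
      unfolding T_def by (rule sum_CS)
    also have "\<dots> \<le> norm (y k) * norm (x k)"
      unfolding e using b1 b2
      by (intro mult_mono) (auto intro: real_le_lsqrt simp: sum_nonneg)
    also have "\<dots> \<le> 1" using nx[OF k] ny[OF k] by (simp add: mult_le_one)
    finally show ?thesis .
  qed
  have "trace_norm A = cmod (complex_of_real (\<Sum>b\<in>B'. s b))"
  proof -
    have "(\<Sum>b\<in>B'. s b) \<ge> 0" by (intro sum_nonneg) (auto simp: B'_def)
    then show ?thesis using tn' by (metis abs_of_nonneg norm_of_real)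
  qed
  also have "\<dots> = cmod (\<Sum>k\<in>K. c k * T k)" using eq by simp
  also have "\<dots> \<le> (\<Sum>k\<in>K. cmod (c k) * cmod (T k))"
    using norm_sum[of "\<lambda>k. c k * T k" K] by (simp add: norm_mult)
  also have "\<dots> \<le> (\<Sum>k\<in>K. cmod (c k))"
    using Tk by (intro sum_mono) (simp add: mult_left_le)
  finally show ?thesis .
qed

definition smat :: "complex \<Rightarrow> complex^'n^'n \<Rightarrow> complex^'n^'n" where
  "smat c A = (\<chi> i j. c * A$i$j)"

lemma rk1_zero[simp]: "rk1 0 u v = 0" by (simp add: rk1_def vec_eq_iff)

lemma tn_nonneg: "trace_norm A \<ge> 0"
proof -
  obtain B s u where B: "onb B" and s0: "\<And>b. b\<in>B \<Longrightarrow> s b \<ge> 0"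
    and nu: "\<And>b. b\<in>B \<Longrightarrow> norm (u b) = 1"
    and dec: "A = (\<Sum>b\<in>B. rk1 (complex_of_real (s b)) (u b) b)"
    and tn: "trace_norm A = (\<Sum>b\<in>B. s b)"
    and "\<And>b. b\<in>B \<Longrightarrow> A *v b = complex_of_real (s b) *s u b"
    and "\<And>b c. b\<in>B \<Longrightarrow> c\<in>B \<Longrightarrow> s b > 0 \<Longrightarrow> s c > 0 \<Longrightarrow> ip (u b) (u c) = (if b = c then 1 else 0)"
    using tn_struct[of A] by blast
  show ?thesis using s0 by (simp add: tn sum_nonneg)
qed

lemma tn_eq0: "trace_norm A = 0 \<Longrightarrow> A = 0"
proof -
  assume z: "trace_norm A = 0"
  obtain B s u where B: "onb B" and s0: "\<And>b. b\<in>B \<Longrightarrow> s b \<ge> 0"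
    and nu: "\<And>b. b\<in>B \<Longrightarrow> norm (u b) = 1"
    and dec: "A = (\<Sum>b\<in>B. rk1 (complex_of_real (s b)) (u b) b)"
    and tn: "trace_norm A = (\<Sum>b\<in>B. s b)"
    and "\<And>b. b\<in>B \<Longrightarrow> A *v b = complex_of_real (s b) *s u b"
    and "\<And>b c. b\<in>B \<Longrightarrow> c\<in>B \<Longrightarrow> s b > 0 \<Longrightarrow> s c > 0 \<Longrightarrow> ip (u b) (u c) = (if b = c then 1 else 0)"
    using tn_struct[of A] by blast
  have "\<forall>b\<in>B. s b = 0" using z tn s0 onb_fin[OF B] by (simp add: sum_nonneg_eq_0_iff)
  then show "A = 0" by (simp add: dec)
qed

lemma tn_zero[simp]: "trace_norm (0::complex^'n^'n) = 0"
proof -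
  have "trace_norm (0::complex^'n^'n) \<le> (\<Sum>k\<in>{}. cmod ((\<lambda>_::nat. 0) k))"
    by (rule tn_le[where x="\<lambda>_. 0" and y="\<lambda>_. 0"]) auto
  then show ?thesis using tn_nonneg[of "0::complex^'n^'n"] by simp
qed

lemma tn_add:
  fixes A B :: "complex^'n^'n"
  shows "trace_norm (A + B) \<le> trace_norm A + trace_norm B"
proof -
  obtain B1 s1 u1 where B1: "onb B1" and s1: "\<And>b. b\<in>B1 \<Longrightarrow> s1 b \<ge> 0"
    and u1: "\<And>b. b\<in>B1 \<Longrightarrow> norm (u1 b) = 1"
    and d1: "A = (\<Sum>b\<in>B1. rk1 (complex_of_real (s1 b)) (u1 b) b)"
    and t1: "trace_norm A = (\<Sum>b\<in>B1. s1 b)"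
    and "\<And>b. b\<in>B1 \<Longrightarrow> A *v b = complex_of_real (s1 b) *s u1 b"
    and "\<And>b c. b\<in>B1 \<Longrightarrow> c\<in>B1 \<Longrightarrow> s1 b > 0 \<Longrightarrow> s1 c > 0 \<Longrightarrow> ip (u1 b) (u1 c) = (if b = c then 1 else 0)"
    using tn_struct[of A] by blast
  obtain B2 s2 u2 where B2: "onb B2" and s2: "\<And>b. b\<in>B2 \<Longrightarrow> s2 b \<ge> 0"
    and u2: "\<And>b. b\<in>B2 \<Longrightarrow> norm (u2 b) = 1"
    and d2: "B = (\<Sum>b\<in>B2. rk1 (complex_of_real (s2 b)) (u2 b) b)"
    and t2: "trace_norm B = (\<Sum>b\<in>B2. s2 b)"
    and "\<And>b. b\<in>B2 \<Longrightarrow> B *v b = complex_of_real (s2 b) *s u2 b"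
    and "\<And>b c. b\<in>B2 \<Longrightarrow> c\<in>B2 \<Longrightarrow> s2 b > 0 \<Longrightarrow> s2 c > 0 \<Longrightarrow> ip (u2 b) (u2 c) = (if b = c then 1 else 0)"
    using tn_struct[of B] by blast
  have f1: "finite B1" and f2: "finite B2" using onb_fin B1 B2 by auto
  define c where "c = case_sum (\<lambda>b. complex_of_real (s1 b)) (\<lambda>b. complex_of_real (s2 b))"
  define x where "x = case_sum u1 u2"
  define y where "y = case_sum (\<lambda>b::complex^'n. b) (\<lambda>b::complex^'n. b)"
  have "A + B = (\<Sum>k\<in>B1 <+> B2. rk1 (c k) (x k) (y k))"
    using f1 f2 by (simp add: sum.Plus d1 d2 c_def x_def y_def o_def)
  then have "trace_norm (A + B) \<le> (\<Sum>k\<in>B1 <+> B2. cmod (c k))"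
    using f1 f2 u1 u2 onb_norm[OF B1] onb_norm[OF B2]
    by (intro tn_le) (auto simp: x_def y_def)
  also have "\<dots> = trace_norm A + trace_norm B"
    using f1 f2 s1 s2 by (simp add: sum.Plus c_def o_def t1 t2)
  finally show ?thesis .
qed

lemma smat_sum: "smat c (\<Sum>k\<in>K. M k) = (\<Sum>k\<in>K. smat c (M k))"
  by (simp add: smat_def vec_eq_iff sum_distrib_left)

lemma smat_rk1: "smat c (rk1 d u v) = rk1 (c * d) u v"
  by (simp add: smat_def rk1_def vec_eq_iff mult.assoc)

lemma tn_smat: "trace_norm (smat c A) \<le> cmod c * trace_norm A"
proof -
  obtain B s u where B: "onb B" and s0: "\<And>b. b\<in>B \<Longrightarrow> s b \<ge> 0"
    and nu: "\<And>b. b\<in>B \<Longrightarrow> norm (u b) = 1"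
    and dec: "A = (\<Sum>b\<in>B. rk1 (complex_of_real (s b)) (u b) b)"
    and tn: "trace_norm A = (\<Sum>b\<in>B. s b)"
    and "\<And>b. b\<in>B \<Longrightarrow> A *v b = complex_of_real (s b) *s u b"
    and "\<And>b c. b\<in>B \<Longrightarrow> c\<in>B \<Longrightarrow> s b > 0 \<Longrightarrow> s c > 0 \<Longrightarrow> ip (u b) (u c) = (if b = c then 1 else 0)"
    using tn_struct[of A] by blast
  have "smat c A = (\<Sum>b\<in>B. rk1 (c * complex_of_real (s b)) (u b) b)"
    by (simp add: dec smat_sum smat_rk1)
  then have "trace_norm (smat c A) \<le> (\<Sum>b\<in>B. cmod (c * complex_of_real (s b)))"
    using onb_fin[OF B] nu onb_norm[OF B] by (intro tn_le) auto
  also have "\<dots> = cmod c * trace_norm A"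
    using s0 by (simp add: tn norm_mult sum_distrib_left)
  finally show ?thesis .
qed

lemma smat_neg: "smat (-1) A = - A" by (simp add: smat_def vec_eq_iff)

lemma tn_uminus: "trace_norm (- A) \<le> trace_norm A"
  using tn_smat[of "-1" A] by (simp add: smat_neg)

lemma tn_diff: "trace_norm (A - B) \<le> trace_norm A + trace_norm B"
  using tn_add[of A "- B"] tn_uminus[of B] by simp

lemma tn_sum: "trace_norm (\<Sum>k\<in>K. M k) \<le> (\<Sum>k\<in>K. trace_norm (M k))"
proof (induction K rule: infinite_finite_induct)
  case (insert k K)
  then show ?case using tn_add[of "M k" "sum M K"] by simp
qed simp_all

lemma tn_trace:
  fixes A :: "complex^'n^'n"
  shows "cmod (trace A) \<le> trace_norm A"
proof -
  obtain B s u where B: "onb B" and s0: "\<And>b. b\<in>B \<Longrightarrow> s b \<ge> 0"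
    and nu: "\<And>b. b\<in>B \<Longrightarrow> norm (u b) = 1"
    and dec: "A = (\<Sum>b\<in>B. rk1 (complex_of_real (s b)) (u b) b)"
    and tn: "trace_norm A = (\<Sum>b\<in>B. s b)"
    and "\<And>b. b\<in>B \<Longrightarrow> A *v b = complex_of_real (s b) *s u b"
    and "\<And>b c. b\<in>B \<Longrightarrow> c\<in>B \<Longrightarrow> s b > 0 \<Longrightarrow> s c > 0 \<Longrightarrow> ip (u b) (u c) = (if b = c then 1 else 0)"
    using tn_struct[of A] by blast
  have "trace A = (\<Sum>b\<in>B. complex_of_real (s b) * ip b (u b))"
    by (simp add: dec trace_sum trace_rk1)
  then have "cmod (trace A) \<le> (\<Sum>b\<in>B. cmod (complex_of_real (s b) * ip b (u b)))"
    by (simp add: norm_sum)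
  also have "\<dots> \<le> (\<Sum>b\<in>B. s b)"
  proof (intro sum_mono)
    fix b assume b: "b \<in> B"
    have "cmod (ip b (u b)) \<le> 1" using ip_CS[of b "u b"] nu[OF b] onb_norm[OF B b] by simp
    then show "cmod (complex_of_real (s b) * ip b (u b)) \<le> s b"
      using s0[OF b] by (simp add: norm_mult mult_left_le)
  qed
  finally show ?thesis by (simp add: tn)
qed

lemma my_nth_le: "norm ((x::complex^'n) $ i) \<le> norm x"
  unfolding norm_vec_def by (rule member_le_L2_set) simp_all

lemma tn_entry:
  fixes A :: "complex^'n^'n"
  shows "cmod (A$i$j) \<le> trace_norm A"
proof -
  obtain B s u where B: "onb B" and s0: "\<And>b. b\<in>B \<Longrightarrow> s b \<ge> 0"
    and nu: "\<And>b. b\<in>B \<Longrightarrow> norm (u b) = 1"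
    and dec: "A = (\<Sum>b\<in>B. rk1 (complex_of_real (s b)) (u b) b)"
    and tn: "trace_norm A = (\<Sum>b\<in>B. s b)"
    and "\<And>b. b\<in>B \<Longrightarrow> A *v b = complex_of_real (s b) *s u b"
    and "\<And>b c. b\<in>B \<Longrightarrow> c\<in>B \<Longrightarrow> s b > 0 \<Longrightarrow> s c > 0 \<Longrightarrow> ip (u b) (u c) = (if b = c then 1 else 0)"
    using tn_struct[of A] by blast
  have "A$i$j = (\<Sum>b\<in>B. complex_of_real (s b) * (u b)$i * cnj (b$j))"
    by (simp add: dec rk1_def)
  then have "cmod (A$i$j) \<le> (\<Sum>b\<in>B. cmod (complex_of_real (s b) * (u b)$i * cnj (b$j)))"
    by (simp add: norm_sum)
  also have "\<dots> \<le> (\<Sum>b\<in>B. s b)"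
  proof (intro sum_mono)
    fix b assume b: "b \<in> B"
    have "cmod ((u b)$i) \<le> 1" using my_nth_le[of "u b" i] nu[OF b] by simp
    moreover have "cmod (b$j) \<le> 1" using my_nth_le[of b j] onb_norm[OF B b] by simp
    ultimately have "cmod ((u b)$i) * cmod (b$j) \<le> 1" by (simp add: mult_le_one)
    then show "cmod (complex_of_real (s b) * (u b)$i * cnj (b$j)) \<le> s b"
      using s0[OF b] by (simp add: norm_mult mult.assoc mult_left_le)
  qed
  finally show ?thesis by (simp add: tn)
qed

lemma tn_density: "density_matrix \<rho> \<Longrightarrow> trace_norm \<rho> \<le> 1"
proof -
  assume d: "density_matrix \<rho>"
  then have h: "mat_adj \<rho> = \<rho>" and q: "\<And>v. 0 \<le> Re (ip v (\<rho> *v v))" and tr: "trace \<rho> = 1"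
    by (auto simp: density_matrix_def psd_iff)
  obtain B where B: "onb B" and ev: "\<And>b. b \<in> B \<Longrightarrow> \<rho> *v b = ip b (\<rho> *v b) *s b"
    using spectral'[OF h] by blast
  define \<mu> where "\<mu> b = Re (ip b (\<rho> *v b))" for b
  have ev': "\<rho> *v b = complex_of_real (\<mu> b) *s b" if "b \<in> B" for b
    using herm_real[OF h, of b] ev[OF that] unfolding \<mu>_def by metis
  have dec: "\<rho> = (\<Sum>b\<in>B. rk1 (complex_of_real (\<mu> b)) b b)"
    unfolding matrix_eq
  proof
    fix x
    show "\<rho> *v x = (\<Sum>b\<in>B. rk1 (complex_of_real (\<mu> b)) b b) *v x"
      unfolding mv_expand[OF B, of \<rho> x] sum_mv rk1_mv
      by (intro sum.cong refl) (simp add: ev' ac_simps)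
  qed
  have "trace \<rho> = (\<Sum>b\<in>B. complex_of_real (\<mu> b))"
    by (subst dec) (simp add: trace_sum trace_rk1 ip_norm1[OF onb_norm[OF B]])
  then have "complex_of_real (\<Sum>b\<in>B. \<mu> b) = 1" using tr by (metis of_real_sum)
  then have s1: "(\<Sum>b\<in>B. \<mu> b) = 1" by (simp only: of_real_eq_1_iff)
  have "trace_norm \<rho> \<le> (\<Sum>b\<in>B. cmod (complex_of_real (\<mu> b)))"
    using onb_fin[OF B] onb_norm[OF B] by (intro tn_le[OF _ _ _ dec]) auto
  also have "\<dots> = (\<Sum>b\<in>B. \<mu> b)" using q by (intro sum.cong refl) (simp add: \<mu>_def)
  finally show ?thesis using s1 by simp
qed

lemma trace_smat: "trace (smat c A) = c * trace A"
  by (simp add: trace_def smat_def sum_distrib_left)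

lemma smat_add: "smat c A + smat c B = smat c (A + B)"
  by (simp add: smat_def vec_eq_iff distrib_left)

lemma smat_addc: "smat (c + d) A = smat c A + smat d A"
  by (simp add: smat_def vec_eq_iff distrib_right)

lemma smat_0[simp]: "smat 0 A = 0" by (simp add: smat_def vec_eq_iff)

lemma scaleR_smat: "r *\<^sub>R (A::complex^'n^'n) = smat (complex_of_real r) A"
  by (simp add: smat_def vec_eq_iff) (simp add: scaleR_conv_of_real)

lemma limit_smat: "limit_channel \<rho> X = smat (trace X) \<rho>"
  by (simp add: limit_channel_def smat_def)

locale cl =
  fixes F :: "complex^'n^'n \<Rightarrow> complex^'n^'n"
  assumes cl: "clinear_map F"
begin

lemma F_add: "F (X + Y) = F X + F Y" using cl by (simp add: clinear_map_def)

lemma F_smat: "F (smat c X) = smat c (F X)" using cl by (simp add: clinear_map_def smat_def)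

lemma F_0: "F 0 = 0"
proof -
  have "F (0 + 0) = F 0 + F 0" by (rule F_add)
  then show ?thesis by simp
qed

lemma F_diff: "F (X - Y) = F X - F Y"
proof -
  have "F (X - Y + Y) = F (X - Y) + F Y" by (rule F_add)
  then show ?thesis by (simp add: algebra_simps)
qed

lemma F_sum: "F (\<Sum>k\<in>K. M k) = (\<Sum>k\<in>K. F (M k))"
  by (induction K rule: infinite_finite_induct) (simp_all add: F_0 F_add)

definition E :: "'n \<Rightarrow> 'n \<Rightarrow> complex^'n^'n" where
  "E i j = (\<chi> k l. if k = i \<and> l = j then 1 else 0)"

lemma mat_expand: "X = (\<Sum>i\<in>UNIV. \<Sum>j\<in>UNIV. smat (X$i$j) (E i j))"
proof -
  have "(\<Sum>i\<in>UNIV. \<Sum>j\<in>UNIV. smat (X$i$j) (E i j)) $ k $ l = X $ k $ l" for k l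
  proof -
    have inner: "(\<Sum>j\<in>UNIV. (smat (X$i$j) (E i j)) $ k $ l) = (if i = k then X$k$l else 0)" for i
    proof (cases "i = k")
      case True
      have "(\<Sum>j\<in>UNIV. (smat (X$i$j) (E i j)) $ k $ l) = (\<Sum>j\<in>UNIV. if j = l then X$k$j else 0)"
        using True by (intro sum.cong refl) (auto simp: smat_def E_def)
      then show ?thesis using True by simp
    next
      case False
      then show ?thesis by (simp add: smat_def E_def)
    qed
    have "(\<Sum>i\<in>UNIV. \<Sum>j\<in>UNIV. smat (X$i$j) (E i j)) $ k $ l
        = (\<Sum>i\<in>UNIV. \<Sum>j\<in>UNIV. (smat (X$i$j) (E i j)) $ k $ l)" by simp
    also have "\<dots> = (\<Sum>i\<in>UNIV. if i = k then X$k$l else 0)" by (simp only: inner)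
    also have "\<dots> = X $ k $ l" by simp
    finally show ?thesis .
  qed
  then show ?thesis by (simp add: vec_eq_iff)
qed

definition C where "C = (\<Sum>i\<in>UNIV. \<Sum>j\<in>UNIV. trace_norm (F (E i j)))"

lemma C_nonneg: "C \<ge> 0" unfolding C_def by (intro sum_nonneg tn_nonneg)

lemma F_bounded: "trace_norm (F X) \<le> C * trace_norm X"
proof -
  have "F X = (\<Sum>i\<in>UNIV. \<Sum>j\<in>UNIV. smat (X$i$j) (F (E i j)))"
    by (subst mat_expand[of X]) (simp add: F_sum F_smat)
  then have "trace_norm (F X) \<le> (\<Sum>i\<in>UNIV. trace_norm (\<Sum>j\<in>UNIV. smat (X$i$j) (F (E i j))))"
    using tn_sum by simp
  also have "\<dots> \<le> (\<Sum>i\<in>UNIV. \<Sum>j\<in>UNIV. trace_norm (smat (X$i$j) (F (E i j))))"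
    by (intro sum_mono tn_sum)
  also have "\<dots> \<le> (\<Sum>i\<in>UNIV. \<Sum>j\<in>UNIV. trace_norm X * trace_norm (F (E i j)))"
  proof (intro sum_mono)
    fix i j
    have "trace_norm (smat (X$i$j) (F (E i j))) \<le> cmod (X$i$j) * trace_norm (F (E i j))"
      by (rule tn_smat)
    also have "\<dots> \<le> trace_norm X * trace_norm (F (E i j))"
      by (intro mult_right_mono tn_entry tn_nonneg)
    finally show "trace_norm (smat (X$i$j) (F (E i j))) \<le> trace_norm X * trace_norm (F (E i j))" .
  qed
  also have "\<dots> = C * trace_norm X" by (simp add: C_def sum_distrib_left mult.commute)
  finally show ?thesis .
qed

lemma erg_bdd:
  "bdd_above (insert 0 {trace_norm (F \<sigma>) / trace_norm \<sigma> | \<sigma>. \<sigma> \<noteq> 0 \<and> trace \<sigma> = 0})"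
proof (rule bdd_aboveI[where M = C])
  fix x assume "x \<in> insert 0 {trace_norm (F \<sigma>) / trace_norm \<sigma> | \<sigma>. \<sigma> \<noteq> 0 \<and> trace \<sigma> = 0}"
  then show "x \<le> C"
  proof
    assume "x = 0" then show ?thesis using C_nonneg by simp
  next
    assume "x \<in> {trace_norm (F \<sigma>) / trace_norm \<sigma> | \<sigma>. \<sigma> \<noteq> 0 \<and> trace \<sigma> = 0}"
    then obtain \<sigma> where x: "x = trace_norm (F \<sigma>) / trace_norm \<sigma>" and "\<sigma> \<noteq> 0" by blast
    then have pos: "trace_norm \<sigma> > 0" using tn_nonneg[of \<sigma>] tn_eq0[of \<sigma>] by force
    show ?thesis unfolding x using F_bounded[of \<sigma>] pos by (simp add: divide_le_eq)
  qed
qed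

lemma erg_nonneg: "ergodicity_coeff F \<ge> 0"
  unfolding ergodicity_coeff_def by (rule cSup_upper[OF _ erg_bdd]) simp

lemma erg_bound:
  assumes "trace X = 0"
  shows "trace_norm (F X) \<le> ergodicity_coeff F * trace_norm X"
proof (cases "X = 0")
  case True
  then show ?thesis by (simp add: F_0)
next
  case False
  then have pos: "trace_norm X > 0" using tn_nonneg[of X] tn_eq0[of X] by force
  have "trace_norm (F X) / trace_norm X \<le> ergodicity_coeff F"
    unfolding ergodicity_coeff_def using False assms by (intro cSup_upper[OF _ erg_bdd]) blast
  then show ?thesis using pos by (simp add: divide_le_eq)
qed

end

lemma smat_smat: "smat c (smat d A) = smat (c * d) A"
  by (simp add: smat_def vec_eq_iff mult.assoc)

lemma mat1_ne0: "(mat 1 :: complex^'n^'n) \<noteq> 0"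
proof
  assume "(mat 1 :: complex^'n^'n) = 0"
  then have "(mat 1 :: complex^'n^'n) $ undefined $ undefined = 0" by simp
  then show False by (simp add: mat_def)
qed

theorem mainTheorem8:
  fixes F :: "complex^'n^'n \<Rightarrow> complex^'n^'n" and \<rho> :: "complex^'n^'n"
  assumes "cptp F"
    and "ergodicity_coeff F < 1"
    and "density_matrix \<rho>" and "F \<rho> = \<rho>"
  shows "norm_1to1 (fundamental_channel F \<rho>)
           \<le> (1 + ergodicity_coeff F) / (1 - ergodicity_coeff F)"
proof -
  have clF: "clinear_map F" and tp: "\<And>X. trace (F X) = trace X"
    using assms(1) by (auto simp: cptp_def trace_preserving_def)
  interpret cl F by (rule cl.intro[OF clF])
  define \<tau> where "\<tau> = ergodicity_coeff F"
  have \<tau>0: "\<tau> \<ge> 0" unfolding \<tau>_def by (rule erg_nonneg)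
  have \<tau>1: "\<tau> < 1" unfolding \<tau>_def by (rule assms(2))
  have tr\<rho>: "trace \<rho> = 1" using assms(3) by (simp add: density_matrix_def)
  have tn\<rho>: "trace_norm \<rho> \<le> 1" using tn_density[OF assms(3)] .
  define G where "G X = X - F X + limit_channel \<rho> X" for X
  have Zeq: "fundamental_channel F \<rho> = inv G"
    unfolding fundamental_channel_def G_def[abs_def] ..
  have trG: "trace (G X) = trace X" for X
    by (simp add: G_def limit_smat trace_add trace_sub trace_smat tp tr\<rho>)
  have lin: "linear G"
  proof (rule linearI)
    fix X Y
    show "G (X + Y) = G X + G Y"
      by (simp add: G_def limit_smat F_add trace_add smat_addc algebra_simps)
  next
    fix r :: real and X
    have "r *\<^sub>R G X = r *\<^sub>R X - r *\<^sub>R F X + r *\<^sub>R limit_channel \<rho> X"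
      by (simp add: G_def algebra_simps)
    also have "\<dots> = G (r *\<^sub>R X)"
      by (simp add: G_def scaleR_smat F_smat limit_smat smat_smat trace_smat)
    finally show "G (r *\<^sub>R X) = r *\<^sub>R G X" by simp
  qed
  have G0: "X = 0" if GX: "G X = 0" for X
  proof -
    have trX: "trace X = 0" using trG[of X] GX by (simp add: trace_def)
    then have "X - F X = 0" using GX by (simp add: G_def limit_smat)
    then have FX: "F X = X" by simp
    have "trace_norm X \<le> \<tau> * trace_norm X"
      using erg_bound[OF trX] FX by (simp add: \<tau>_def)
    then have "(1 - \<tau>) * trace_norm X \<le> 0" by (simp add: algebra_simps)
    then have "trace_norm X \<le> 0" using \<tau>1 by (simp add: mult_le_0_iff)
    then have "trace_norm X = 0" using tn_nonneg[of X] by simp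
    then show ?thesis by (rule tn_eq0)
  qed
  have inj: "inj G"
  proof (rule injI)
    fix X Y assume "G X = G Y"
    then have "G (X - Y) = 0" using linear_diff[OF lin] by simp
    then show "X = Y" using G0[of "X - Y"] by simp
  qed
  have surj: "surj G" using linear_injective_imp_surjective[OF lin inj] by simp
  define K where "K = (1 + \<tau>) / (1 - \<tau>)"
  have key: "(1 - \<tau>) * trace_norm (inv G \<sigma>) \<le> (1 + \<tau>) * trace_norm \<sigma>" for \<sigma>
  proof -
    define Y where "Y = inv G \<sigma>"
    have GY: "G Y = \<sigma>" unfolding Y_def by (rule surj_f_inv_f[OF surj])
    have trY: "trace Y = trace \<sigma>" using trG[of Y] GY by simp
    define L where "L = smat (trace \<sigma>) \<rho>"
    have GY': "\<sigma> = Y - F Y + L" using GY by (simp add: G_def limit_smat trY L_def)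
    have FL: "F L = L" by (simp add: L_def F_smat assms(4))
    define Y0 where "Y0 = Y - L"
    have FY0: "F Y0 = F Y - L" by (simp add: Y0_def F_diff FL)
    have tr0: "trace Y0 = 0" by (simp add: Y0_def L_def trace_sub trace_smat tr\<rho> trY)
    have e1: "Y0 = (\<sigma> - L) + F Y0" unfolding FY0 unfolding GY' Y0_def by (simp add: algebra_simps)
    have e2: "Y = \<sigma> + F Y0" unfolding FY0 GY' by (simp add: algebra_simps)
    have tnL: "trace_norm L \<le> trace_norm \<sigma>"
    proof -
      have "trace_norm L \<le> cmod (trace \<sigma>) * trace_norm \<rho>" unfolding L_def by (rule tn_smat)
      also have "\<dots> \<le> trace_norm \<sigma> * 1"
        by (intro mult_mono tn_trace tn\<rho>) (simp_all add: tn_nonneg)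
      finally show ?thesis by simp
    qed
    have tnF: "trace_norm (F Y0) \<le> \<tau> * trace_norm Y0" unfolding \<tau>_def by (rule erg_bound[OF tr0])
    have "trace_norm Y0 \<le> trace_norm (\<sigma> - L) + trace_norm (F Y0)"
      using tn_add[of "\<sigma> - L" "F Y0"] e1 by simp
    also have "\<dots> \<le> trace_norm \<sigma> + trace_norm L + \<tau> * trace_norm Y0"
      using tn_diff[of \<sigma> L] tnF by simp
    finally have t0: "(1 - \<tau>) * trace_norm Y0 \<le> 2 * trace_norm \<sigma>"
      using tnL by (simp add: algebra_simps)
    have tY: "trace_norm Y \<le> trace_norm \<sigma> + \<tau> * trace_norm Y0"
      using tn_add[of \<sigma> "F Y0"] e2 tnF by simp
    have "(1 - \<tau>) * trace_norm Y \<le> (1 - \<tau>) * (trace_norm \<sigma> + \<tau> * trace_norm Y0)"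
      using tY \<tau>1 by (intro mult_left_mono) simp_all
    also have "\<dots> = (1 - \<tau>) * trace_norm \<sigma> + \<tau> * ((1 - \<tau>) * trace_norm Y0)"
      by (simp add: algebra_simps)
    also have "\<dots> \<le> (1 - \<tau>) * trace_norm \<sigma> + \<tau> * (2 * trace_norm \<sigma>)"
      using t0 \<tau>0 by (intro add_left_mono mult_left_mono) simp_all
    also have "\<dots> = (1 + \<tau>) * trace_norm \<sigma>" by (simp add: algebra_simps)
    finally show ?thesis unfolding Y_def .
  qed
  have bound: "x \<le> K" if x: "x \<in> {trace_norm (inv G \<sigma>) / trace_norm \<sigma> | \<sigma>. \<sigma> \<noteq> 0}" for x
  proof -
    obtain \<sigma> where xs: "x = trace_norm (inv G \<sigma>) / trace_norm \<sigma>" and s0: "\<sigma> \<noteq> 0" using x by blast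
    have pos: "trace_norm \<sigma> > 0" using tn_nonneg[of \<sigma>] tn_eq0[of \<sigma>] s0 by force
    have d: "1 - \<tau> > 0" using \<tau>1 by simp
    show ?thesis unfolding xs K_def using key[of \<sigma>] pos d
      by (simp add: divide_le_eq le_divide_eq mult.commute)
  qed
  have ne: "{trace_norm (inv G \<sigma>) / trace_norm \<sigma> | \<sigma>. \<sigma> \<noteq> 0} \<noteq> {}"
    using mat1_ne0 by blast
  have "norm_1to1 (inv G) \<le> K"
    unfolding norm_1to1_def by (rule cSup_least[OF ne]) (rule bound)
  then show ?thesis by (simp add: Zeq K_def \<tau>_def)
qed

end
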